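(* Let $T=(T_a,T_b)$ be a rooted binary tree on $n$ leaves, where $T_a,T_b$ have $n_a,n_b$ leaves. If $T$ has minimal Colless index among rooted binary trees with $n$ leaves, then $T_a$ has minimal Colless index among rooted binary trees with $n_a$ leaves and $T_b$ has minimal Colless index among rooted binary trees with $n_b$ leaves.
   Context: A rooted binary tree with $n\geq 2$ leaves is a rooted tree whose root has degree 2 and all other internal nodes have degree 3; for $n=1$ it is a single node. $T=(T_a,T_b)$ denotes the decomposition into the subtrees rooted at the two children of the root. For an internal node $v$ with children $v_1,v_2$, let $\kappa(v_i)$ be the number of leaves descending from $v_i$ ($1$ if a leaf). The Colless index is $\mathcal{C}(T)=\sum_v|\kappa(v_1)-\kappa(v_2)|$ over internal nodes $v$. *)

theory Defs
  imports Main
begin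

datatype rbtree = Leaf | Node rbtree rbtree

fun leaves :: "rbtree \<Rightarrow> nat" where
  "leaves Leaf = 1"
| "leaves (Node l r) = leaves l + leaves r"

fun colless :: "rbtree \<Rightarrow> nat" where
  "colless Leaf = 0"
| "colless (Node l r) = colless l + colless r
     + nat \<bar>int (leaves l) - int (leaves r)\<bar>"

definition colless_minimal :: "rbtree \<Rightarrow> bool" where
  "colless_minimal t \<longleftrightarrow> (\<forall>t'. leaves t' = leaves t \<longrightarrow> colless t \<le> colless t')"

end

theory Submission
  imports Defs
begin

theorem lemma2:
  fixes Ta Tb :: rbtree
  assumes "colless_minimal (Node Ta Tb)"
  shows "colless_minimal Ta \<and> colless_minimal Tb"
proof
  show "colless_minimal Ta"
    unfolding colless_minimal_def
  proof (intro allI impI)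
    fix t' assume h: "leaves t' = leaves Ta"
    have "colless (Node Ta Tb) \<le> colless (Node t' Tb)"
      using assms h unfolding colless_minimal_def by (metis leaves.simps(2))
    then show "colless Ta \<le> colless t'" using h by simp
  qed
  show "colless_minimal Tb"
    unfolding colless_minimal_def
  proof (intro allI impI)
    fix t' assume h: "leaves t' = leaves Tb"
    have "colless (Node Ta Tb) \<le> colless (Node Ta t')"
      using assms h unfolding colless_minimal_def by (metis leaves.simps(2))
    then show "colless Tb \<le> colless t'" using h by simp
  qed
qed

end
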